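(* Let $n\ge 3$, $q=\frac{2n}{n-2}$, $\kappa=\frac{n-1}{n}$. Identify $S^1$ with $[-\pi,\pi]$ with endpoints identified, and let $\lambda=-1$ on $(-\pi,0)$, $\lambda=1$ on $(0,\pi)$. Let $N$ be a smooth positive function on $S^1$, $\gamma_N=-\frac{\int_{S^1}\lambda N}{\int_{S^1}N}$, and $t,\eta,\mu\in\mathbb{R}$. For $d>0$ let $\psi_d$ be the unique positive solution in $W^{2,\infty}(S^1)$ of $$-2\kappa q\,d^{-2q/n}\psi_d''-2\eta^2d^{-2q}\psi_d^{-q-1}-\kappa(\mu d^{-q}+\gamma_N+\lambda)^2\psi_d^{-q-1}+\kappa(t+\lambda)^2\psi_d^{q-1}=0,$$ and let $\mathcal{F}(d)=\psi_d(0)$. Suppose $|t|\neq1$ and define $$M_{d,\pm}=\left[\frac{2\eta^2d^{-2q}+\kappa(\mu d^{-q}+\gamma_N\pm1)^2}{\kappa(t\pm1)^2}\right]^{\frac{1}{2q}},\quad m_d=\min(M_{d,+},M_{d,-}),\quad M_d=\max(M_{d,+},M_{d,-}).$$ Then $m_d\le\psi_d\le M_d$ on $S^1$ for all $d>0$, and in particular $m_d\le\mathcal{F}(d)\le M_d$. *)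

theory Defs
  imports "HOL-Analysis.Analysis"
begin

text \<open>S^1 is identified with [-pi,pi] with endpoints glued; functions on S^1 are
  2pi-periodic functions on the real line.\<close>

definition periodic_2pi :: "(real \<Rightarrow> real) \<Rightarrow> bool" where
  "periodic_2pi f \<longleftrightarrow> (\<forall>x. f (x + 2 * pi) = f x)"

definition smooth_fun :: "(real \<Rightarrow> real) \<Rightarrow> bool" where
  "smooth_fun f \<longleftrightarrow> (\<forall>k x. ((deriv ^^ k) f) differentiable (at x))"

text \<open>lambda = -1 on (-pi,0), 1 on (0,pi), extended periodically; the values at the
  null set {k pi} are irrelevant and set to 0.\<close>
definition circ_lambda :: "real \<Rightarrow> real" where
  "circ_lambda x = (if sin x < 0 then -1 else if sin x > 0 then 1 else 0)"

definition gamma_N :: "(real \<Rightarrow> real) \<Rightarrow> real" where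
  "gamma_N N = - (integral {-pi..pi} (\<lambda>x. circ_lambda x * N x) / integral {-pi..pi} N)"

text \<open>psi is a positive W^{2,infinity}(S^1) solution: psi is 2pi-periodic, C^1 with
  Lipschitz derivative psi1, and the equation holds a.e. with psi'' the a.e. derivative
  of psi1.\<close>
definition is_W2inf_solution ::
  "nat \<Rightarrow> real \<Rightarrow> real \<Rightarrow> real \<Rightarrow> real \<Rightarrow> real \<Rightarrow> (real \<Rightarrow> real) \<Rightarrow> bool" where
  "is_W2inf_solution n gam t eta mu d psi \<longleftrightarrow>
     (let q = 2 * real n / (real n - 2); \<kappa> = (real n - 1) / real n in
     periodic_2pi psi \<and> (\<forall>x. psi x > 0) \<and>
     (\<exists>psi1 C. (\<forall>x. (psi has_real_derivative psi1 x) (at x)) \<and> C-lipschitz_on UNIV psi1 \<and>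
        (AE x in lborel. \<exists>psi2. (psi1 has_real_derivative psi2) (at x) \<and>
           - 2 * \<kappa> * q * d powr (- 2 * q / real n) * psi2
           - 2 * eta\<^sup>2 * d powr (- 2 * q) * psi x powr (- q - 1)
           - \<kappa> * (mu * d powr (- q) + gam + circ_lambda x)\<^sup>2 * psi x powr (- q - 1)
           + \<kappa> * (t + circ_lambda x)\<^sup>2 * psi x powr (q - 1) = 0)))"

definition M_pm :: "nat \<Rightarrow> real \<Rightarrow> real \<Rightarrow> real \<Rightarrow> real \<Rightarrow> real \<Rightarrow> real \<Rightarrow> real" where
  "M_pm n gam t eta mu d s =
     (let q = 2 * real n / (real n - 2); \<kappa> = (real n - 1) / real n in
      ((2 * eta\<^sup>2 * d powr (- 2 * q) + \<kappa> * (mu * d powr (- q) + gam + s)\<^sup>2)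
        / (\<kappa> * (t + s)\<^sup>2)) powr (1 / (2 * q)))"

end

theory Submission
  imports Defs
begin

lemma ae_exists_interval:
  assumes "AE x in lborel. P x" "(a::real) < b"
  shows "\<exists>x. a < x \<and> x < b \<and> P x"
proof (rule ccontr)
  assume H: "\<not> ?thesis"
  from assms(1) obtain N where N: "N \<in> null_sets lborel" "{x. \<not> P x} \<subseteq> N"
    using assms(1) by (auto simp: eventually_ae_filter)
  have "{a<..<b} \<subseteq> N" using H N by auto
  then have "negligible {a<..<b}"
    using negligible_subset[OF negligible_iff_null_sets[THEN iffD2, OF null_sets_completionI[OF N(1)]]] by blast
  then show False using assms(2) negligible_interval(2)[of a b] by simp
qed

lemma lip_weak:
  fixes g :: "real \<Rightarrow> real"
  assumes lip: "\<And>x y. \<bar>g x - g y\<bar> \<le> C * \<bar>x - y\<bar>"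
    and ab: "a \<le> b"
    and ae: "AE x in lborel. a < x \<and> x < b \<longrightarrow> (\<exists>D>0. (g has_real_derivative D) (at x))"
  shows "g a \<le> g b"
proof (rule ccontr)
  assume "\<not> g a \<le> g b"
  hence gba: "g b < g a" by simp
  have contg: "continuous_on UNIV g"
  proof -
    have "0 \<le> C" using lip[of 1 0] abs_ge_zero[of "g 1 - g 0"] by simp
    then have "C-lipschitz_on UNIV g" using lip by (intro lipschitz_onI) (auto simp: dist_real_def)
    then show ?thesis by (rule lipschitz_on_continuous_on)
  qed
  define E where "E = {x. a < x \<and> x < b \<and> \<not> (\<exists>D>0. (g has_real_derivative D) (at x))}"
  from ae obtain N where N: "N \<in> null_sets lborel"
     "{x. \<not> (a < x \<and> x < b \<longrightarrow> (\<exists>D>0. (g has_real_derivative D) (at x)))} \<subseteq> N"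
    using ae by (auto simp: eventually_ae_filter)
  have "E \<subseteq> N" using N(2) unfolding E_def by auto
  hence negE: "negligible E"
    using negligible_subset[OF negligible_iff_null_sets[THEN iffD2, OF null_sets_completionI[OF N(1)]]] by blast
  have "negligible (g ` E)"
  proof (rule negligible_locally_Lipschitz_image[OF _ negE])
    show "DIM(real) \<le> DIM(real)" by simp
    fix x assume "x \<in> E"
    show "\<exists>T B. open T \<and> x \<in> T \<and> (\<forall>y\<in>E \<inter> T. norm (g y - g x) \<le> B * norm (y - x))"
      by (rule exI[of _ UNIV], rule exI[of _ C]) (simp add: lip)
  qed
  moreover have "{g b<..<g a} \<subseteq> g ` E"
  proof
    fix y assume y: "y \<in> {g b<..<g a}"
    define S where "S = {x. a \<le> x \<and> x \<le> b \<and> y \<le> g x}"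
    have "closed S" unfolding S_def
      using contg by (intro closed_Collect_conj closed_Collect_le) (auto intro: continuous_intros continuous_on_subset)
    moreover have "S \<noteq> {}" using y ab unfolding S_def by auto
    moreover have bdd: "bdd_above S" unfolding S_def by (auto intro: bdd_aboveI[of _ b])
    ultimately have xS: "Sup S \<in> S" by (intro closed_contains_Sup) 
    define x where "x = Sup S"
    have le: "z \<le> x" if "z \<in> S" for z using that bdd unfolding x_def by (simp add: cSup_upper)
    have xab: "a \<le> x" "x \<le> b" "y \<le> g x" using xS unfolding x_def S_def by auto
    have "\<exists>z. x \<le> z \<and> z \<le> b \<and> g z = y"
      using IVT2'[of "g" b y x] xab y contg by (auto intro: continuous_on_subset)
    then obtain z where z: "x \<le> z" "z \<le> b" "g z = y" by blast
    have "z \<in> S" using z xab unfolding S_def by auto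
    hence "z = x" using le z by force
    hence gx: "g x = y" using z by simp
    have "x \<noteq> a" using gx y by auto
    moreover have "x \<noteq> b" using gx y by auto
    ultimately have ax: "a < x" "x < b" using xab by auto
    have "x \<in> E"
    proof (unfold E_def, intro CollectI conjI ax notI)
      assume "\<exists>D>0. (g has_real_derivative D) (at x)"
      then obtain D where "D > 0" "(g has_real_derivative D) (at x)" by blast
      from DERIV_pos_inc_right[OF this(2) this(1)] obtain e where e: "e > 0"
        "\<And>h. h > 0 \<Longrightarrow> h < e \<Longrightarrow> g x < g (x + h)" by blast
      define h where "h = min (e/2) (b - x)"
      have h: "h > 0" "h < e" "x + h \<le> b" using e ax unfolding h_def by auto
      have "x + h \<in> S" using e(2)[OF h(1,2)] gx h xab unfolding S_def by auto
      thus False using le h by force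
    qed
    thus "y \<in> g ` E" using gx by force
  qed
  ultimately have "negligible {g b<..<g a}" by (rule negligible_subset)
  then show False using gba negligible_interval(2)[of "g b" "g a"] by simp
qed

lemma ae_sub:
  fixes a b c d :: real
  assumes "AE x in M. (a < x \<and> x < b \<longrightarrow> P x)" "a \<le> c" "d \<le> b"
  shows "AE x in M. (c < x \<and> x < d \<longrightarrow> P x)"
  using assms(1)
proof (rule eventually_mono)
  fix x assume "a < x \<and> x < b \<longrightarrow> P x"
  then show "c < x \<and> x < d \<longrightarrow> P x" using assms(2,3) by linarith
qed

lemma lip_strict:
  fixes g :: "real \<Rightarrow> real"
  assumes lip: "\<And>x y. \<bar>g x - g y\<bar> \<le> C * \<bar>x - y\<bar>"
    and ab: "a < b"
    and ae: "AE x in lborel. a < x \<and> x < b \<longrightarrow> (\<exists>D>0. (g has_real_derivative D) (at x))"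
  shows "g a < g b"
proof (rule ccontr)
  assume "\<not> g a < g b"
  moreover have "g a \<le> g b" using lip_weak[OF lip _ ae] ab by simp
  ultimately have eq: "g a = g b" by simp
  have const: "g x = g a" if "a \<le> x" "x \<le> b" for x
  proof -
    have "g a \<le> g x"
      using lip_weak[OF lip that(1) ae_sub[OF ae order_refl that(2)]] .
    moreover have "g x \<le> g b"
      using lip_weak[OF lip that(2) ae_sub[OF ae that(1) order_refl]] .
    ultimately show ?thesis using eq by simp
  qed
  obtain x where x: "a < x" "x < b" "\<exists>D>0. (g has_real_derivative D) (at x)"
    using ae_exists_interval[OF ae ab] by auto
  then obtain D where "D > 0" "(g has_real_derivative D) (at x)" by blast
  from DERIV_pos_inc_right[OF this(2) this(1)] obtain e where e: "e > 0"
    "\<And>h. h > 0 \<Longrightarrow> h < e \<Longrightarrow> g x < g (x + h)" by blast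
  define h where "h = min (e/2) ((b - x)/2)"
  have h1: "h \<le> (b - x)/2" unfolding h_def by (rule min.cobounded2)
  have h0: "h > 0" "h < e" using e(1) x unfolding h_def by auto
  have h2: "x + h \<le> b"
  proof -
    have "2 * h \<le> b - x" using h1 by simp
    thus ?thesis using h0 x(2) by simp
  qed
  have h: "h > 0" "h < e" "x + h \<le> b" using h0 h2 by auto
  have "g x < g (x + h)" using e(2)[OF h(1,2)] .
  moreover have "g x = g a" by (rule const) (use x in linarith)+
  moreover have "g (x+h) = g a" by (rule const) (use x h in linarith)+
  ultimately show False by simp
qed

lemma no_local_max:
  fixes f g :: "real \<Rightarrow> real"
  assumes der: "\<And>x. (f has_real_derivative g x) (at x)"
    and lip: "\<And>x y. \<bar>g x - g y\<bar> \<le> C * \<bar>x - y\<bar>"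
    and dpos: "\<delta> > 0"
    and ae: "AE x in lborel. x0 - \<delta> < x \<and> x < x0 + \<delta> \<longrightarrow> (\<exists>D>0. (g has_real_derivative D) (at x))"
  shows "\<exists>x. f x0 < f x"
proof (cases "g x0 \<ge> 0")
  case True
  define x1 where "x1 = x0 + \<delta>/2"
  have "x0 < x1" using dpos unfolding x1_def by simp
  from MVT2[OF this, of f g] der obtain z where z: "x0 < z" "z < x1" "f x1 - f x0 = (x1 - x0) * g z"
    by blast
  have "g x0 < g z"
    by (rule lip_strict[OF lip z(1) ae_sub[OF ae]]) (use z dpos in \<open>auto simp: x1_def\<close>)
  hence "f x1 - f x0 > 0" using z True \<open>x0 < x1\<close> by simp
  thus ?thesis by auto
next
  case False
  define x1 where "x1 = x0 - \<delta>/2"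
  have "x1 < x0" using dpos unfolding x1_def by simp
  from MVT2[OF this, of f g] der obtain z where z: "x1 < z" "z < x0" "f x0 - f x1 = (x0 - x1) * g z"
    by blast
  have "g z < g x0"
    by (rule lip_strict[OF lip z(2) ae_sub[OF ae]]) (use z dpos in \<open>auto simp: x1_def\<close>)
  hence "f x0 - f x1 < 0" using z False \<open>x1 < x0\<close> by (simp add: mult_pos_neg)
  thus ?thesis by auto
qed

lemma sign_lemma:
  fixes K A B q p y :: real
  assumes K: "K > 0" and q: "q > 0" and B: "B > 0" and A: "A \<ge> 0" and p: "p > 0"
    and eq: "- K * y - A * p powr (- q - 1) + B * p powr (q - 1) = 0"
  shows "p > (A / B) powr (1 / (2 * q)) \<Longrightarrow> y > 0"
    and "p < (A / B) powr (1 / (2 * q)) \<Longrightarrow> y < 0"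
proof -
  have pq: "p powr (q - 1) = p powr (2 * q) * p powr (- q - 1)"
    by (simp add: powr_add[symmetric])
  have Ky: "K * y = p powr (- q - 1) * (B * p powr (2 * q) - A)"
    using eq unfolding pq by (simp add: algebra_simps)
  have P: "p powr (- q - 1) > 0" using p by simp
  have AB: "((A / B) powr (1 / (2 * q))) powr (2 * q) = A / B"
    using q A B by (simp add: powr_powr powr_one)
  have MM: "(A / B) powr (1 / (2 * q)) \<ge> 0" by simp
  {
    assume h: "p > (A / B) powr (1 / (2 * q))"
    have "((A / B) powr (1 / (2 * q))) powr (2 * q) < p powr (2 * q)"
      using powr_less_mono2[OF _ MM h, of "2*q"] q by simp
    hence "A / B < p powr (2 * q)" unfolding AB .
    hence "A < B * p powr (2 * q)" using B by (simp add: divide_less_eq mult.commute)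
    hence "K * y > 0" unfolding Ky using P by simp
    thus "y > 0" using K by (simp add: zero_less_mult_iff)
  }
  {
    assume h: "p < (A / B) powr (1 / (2 * q))"
    have "p powr (2 * q) < ((A / B) powr (1 / (2 * q))) powr (2 * q)"
      using powr_less_mono2[OF _ _ h, of "2*q"] q p by simp
    hence "p powr (2 * q) < A / B" unfolding AB .
    hence "B * p powr (2 * q) < A" using B by (simp add: less_divide_eq mult.commute)
    hence "K * y < 0" unfolding Ky using P by (simp add: mult_pos_neg)
    thus "y < 0" using K by (simp add: mult_less_0_iff)
  }
qed

lemma per_int:
  assumes "periodic_2pi f"
  shows "f (x + 2 * pi * of_int k) = f x"
proof (induct k rule: int_induct[where k=0])
  case base then show ?case by simp
next
  case (step1 i)
  have "x + 2 * pi * of_int (i + 1) = (x + 2 * pi * of_int i) + 2 * pi" by (simp add: algebra_simps)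
  then show ?case using assms step1 unfolding periodic_2pi_def by metis
next
  case (step2 i)
  have "x + 2 * pi * of_int i = (x + 2 * pi * of_int (i - 1)) + 2 * pi" by (simp add: algebra_simps)
  then show ?case using assms step2 unfolding periodic_2pi_def by metis
qed

lemma per_red:
  assumes "periodic_2pi f"
  shows "\<exists>y\<in>{-pi..pi}. f x = f y"
proof -
  define k where "k = \<lfloor>(x + pi) / (2 * pi)\<rfloor>"
  define y where "y = x - 2 * pi * of_int k"
  have k1: "of_int k \<le> (x + pi) / (2 * pi)" unfolding k_def by (rule of_int_floor_le)
  have k2: "(x + pi) / (2 * pi) < of_int k + 1" unfolding k_def by (rule real_of_int_floor_add_one_gt)
  have "of_int k * (2 * pi) \<le> x + pi" using k1 pi_gt_zero by (simp add: le_divide_eq)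
  moreover have "x + pi < (of_int k + 1) * (2 * pi)" using k2 pi_gt_zero by (simp add: divide_less_eq)
  ultimately have "-pi \<le> y" "y \<le> pi" unfolding y_def by (simp_all add: algebra_simps)
  moreover have "f x = f y"
    using per_int[OF assms, of y k] unfolding y_def by simp
  ultimately show ?thesis by auto
qed


theorem lemma3p12:
  fixes n :: nat and N :: "real \<Rightarrow> real" and t eta mu d :: real and psi :: "real \<Rightarrow> real"
  assumes "n \<ge> 3"
    and "smooth_fun N" and "periodic_2pi N" and "\<forall>x. N x > 0"
    and "\<bar>t\<bar> \<noteq> 1"
    and "d > 0"
    and "is_W2inf_solution n (gamma_N N) t eta mu d psi"
  shows "(\<forall>x. min (M_pm n (gamma_N N) t eta mu d 1) (M_pm n (gamma_N N) t eta mu d (-1)) \<le> psi x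
             \<and> psi x \<le> max (M_pm n (gamma_N N) t eta mu d 1) (M_pm n (gamma_N N) t eta mu d (-1)))
         \<and> min (M_pm n (gamma_N N) t eta mu d 1) (M_pm n (gamma_N N) t eta mu d (-1)) \<le> psi 0
         \<and> psi 0 \<le> max (M_pm n (gamma_N N) t eta mu d 1) (M_pm n (gamma_N N) t eta mu d (-1))"
proof -
  define gam where "gam = gamma_N N"
  define q where "q = 2 * real n / (real n - 2)"
  define k where "k = (real n - 1) / real n"
  have n3: "real n \<ge> 3" using assms(1) by simp
  have qpos: "q > 0" unfolding q_def using n3 by simp
  have kpos: "k > 0" unfolding k_def using n3 by simp
  have sol: "periodic_2pi psi \<and> (\<forall>x. psi x > 0) \<and>
     (\<exists>psi1 C. (\<forall>x. (psi has_real_derivative psi1 x) (at x)) \<and> C-lipschitz_on UNIV psi1 \<and>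
        (AE x in lborel. \<exists>psi2. (psi1 has_real_derivative psi2) (at x) \<and>
           - 2 * k * q * d powr (- 2 * q / real n) * psi2 - 2 * eta\<^sup>2 * d powr (- 2 * q) * psi x powr (- q - 1) - k * (mu * d powr (- q) + gam + circ_lambda x)\<^sup>2 * psi x powr (- q - 1) + k * (t + circ_lambda x)\<^sup>2 * psi x powr (q - 1) = 0))"
    using assms(7) unfolding is_W2inf_solution_def Let_def q_def k_def gam_def by assumption
  then obtain psi1 C where per: "periodic_2pi psi" and pos: "\<And>x. psi x > 0"
    and der: "\<And>x. (psi has_real_derivative psi1 x) (at x)" and lip: "C-lipschitz_on UNIV psi1"
    and ae: "AE x in lborel. \<exists>psi2. (psi1 has_real_derivative psi2) (at x) \<and>
           - 2 * k * q * d powr (- 2 * q / real n) * psi2 - 2 * eta\<^sup>2 * d powr (- 2 * q) * psi x powr (- q - 1) - k * (mu * d powr (- q) + gam + circ_lambda x)\<^sup>2 * psi x powr (- q - 1) + k * (t + circ_lambda x)\<^sup>2 * psi x powr (q - 1) = 0"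
    by blast
  define K where "K = 2 * k * q * d powr (- 2 * q / real n)"
  define A where "A s = 2 * eta\<^sup>2 * d powr (- 2 * q) + k * (mu * d powr (- q) + gam + s)\<^sup>2" for s
  define B where "B s = k * (t + s)\<^sup>2" for s
  define M where "M s = (A s / B s) powr (1 / (2 * q))" for s
  have Meq: "M_pm n gam t eta mu d s = M s" for s
    unfolding M_pm_def Let_def M_def A_def B_def q_def k_def by simp
  have Kpos: "K > 0" unfolding K_def using kpos qpos assms(6) by simp
  have Apos: "A s \<ge> 0" for s
    unfolding A_def using kpos by (intro add_nonneg_nonneg mult_nonneg_nonneg) auto
  have Bpos: "B s > 0" if "s = 1 \<or> s = -1" for s
  proof -
    have "t + s \<noteq> 0" using that assms(5) by auto
    then show ?thesis unfolding B_def using kpos by simp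
  qed
  have lipabs: "\<bar>psi1 x - psi1 y\<bar> \<le> C * \<bar>x - y\<bar>" for x y
    using lipschitz_onD[OF lip, of x y] by (simp add: dist_real_def)
  have contpsi: "continuous_on UNIV psi"
    by (meson DERIV_isCont continuous_at_imp_continuous_on der)
  have pw: "(psi x > max (M 1) (M (-1)) \<longrightarrow> psi2 > 0) \<and> (psi x < min (M 1) (M (-1)) \<longrightarrow> psi2 < 0)"
    if sx: "sin x \<noteq> 0" and E: "- 2 * k * q * d powr (- 2 * q / real n) * psi2 - 2 * eta\<^sup>2 * d powr (- 2 * q) * psi x powr (- q - 1) - k * (mu * d powr (- q) + gam + circ_lambda x)\<^sup>2 * psi x powr (- q - 1) + k * (t + circ_lambda x)\<^sup>2 * psi x powr (q - 1) = 0" for x psi2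
  proof -
    define s where "s = circ_lambda x"
    have s: "s = 1 \<or> s = -1" using sx unfolding s_def circ_lambda_def by auto
    have "- K * psi2 - A s * psi x powr (- q - 1) + B s * psi x powr (q - 1) = - 2 * k * q * d powr (- 2 * q / real n) * psi2 - 2 * eta\<^sup>2 * d powr (- 2 * q) * psi x powr (- q - 1) - k * (mu * d powr (- q) + gam + circ_lambda x)\<^sup>2 * psi x powr (- q - 1) + k * (t + circ_lambda x)\<^sup>2 * psi x powr (q - 1)"
      unfolding K_def A_def B_def s_def by (simp add: algebra_simps)
    then have E2: "- K * psi2 - A s * psi x powr (- q - 1) + B s * psi x powr (q - 1) = 0"
      using E by simp
    note S = sign_lemma[OF Kpos qpos Bpos[OF s] Apos pos E2]
    have "M s \<le> max (M 1) (M (-1))" "min (M 1) (M (-1)) \<le> M s" using s by auto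
    then show ?thesis using S unfolding M_def by auto
  qed
  have aesin: "AE x in lborel. sin (x::real) \<noteq> 0"
  proof -
    have "{x::real. sin x = 0} \<subseteq> range (\<lambda>i::int. of_int i * pi)"
      by (auto simp: sin_zero_iff_int2)
    then have "countable {x::real. sin x = 0}" by (rule countable_subset) simp
    from AE_not_in[OF countable_imp_null_set_lborel[OF this]] show ?thesis by simp
  qed
  have key: "AE x in lborel. sin x \<noteq> 0 \<and> (\<exists>psi2. (psi1 has_real_derivative psi2) (at x) \<and> - 2 * k * q * d powr (- 2 * q / real n) * psi2 - 2 * eta\<^sup>2 * d powr (- 2 * q) * psi x powr (- q - 1) - k * (mu * d powr (- q) + gam + circ_lambda x)\<^sup>2 * psi x powr (- q - 1) + k * (t + circ_lambda x)\<^sup>2 * psi x powr (q - 1) = 0)"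
    using aesin ae by eventually_elim auto
  have maxpart: "psi x \<le> max (M 1) (M (-1))" for x
  proof (rule ccontr)
    let ?Mx = "max (M 1) (M (-1))"
    assume "\<not> psi x \<le> ?Mx"
    then have x1: "psi x > ?Mx" by (simp only: not_le)
    obtain x0 where x0: "x0 \<in> {-pi..pi}" "\<forall>y\<in>{-pi..pi}. psi y \<le> psi x0"
      using continuous_attains_sup[of "{-pi..pi}" psi] continuous_on_subset[OF contpsi] by auto
    have gmax: "psi y \<le> psi x0" for y using per_red[OF per, of y] x0 by auto
    have "psi x0 > ?Mx" using gmax[of x] x1 by simp
    moreover have "open {y. ?Mx < psi y}"
      by (rule open_Collect_less) (auto intro: contpsi)
    ultimately obtain del where del: "del > 0" "\<And>y. \<bar>y - x0\<bar> < del \<Longrightarrow> psi y > ?Mx"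
      unfolding open_real by force
    have aeD: "AE x in lborel. x0 - del < x \<and> x < x0 + del \<longrightarrow> (\<exists>D>0. (psi1 has_real_derivative D) (at x))"
      using key
    proof (rule eventually_mono)
      fix x assume H: "sin x \<noteq> 0 \<and> (\<exists>psi2. (psi1 has_real_derivative psi2) (at x) \<and> - 2 * k * q * d powr (- 2 * q / real n) * psi2 - 2 * eta\<^sup>2 * d powr (- 2 * q) * psi x powr (- q - 1) - k * (mu * d powr (- q) + gam + circ_lambda x)\<^sup>2 * psi x powr (- q - 1) + k * (t + circ_lambda x)\<^sup>2 * psi x powr (q - 1) = 0)"
      show "x0 - del < x \<and> x < x0 + del \<longrightarrow> (\<exists>D>0. (psi1 has_real_derivative D) (at x))"
      proof
        assume "x0 - del < x \<and> x < x0 + del"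
        then have "psi x > ?Mx" using del(2)[of x] by (simp add: abs_less_iff)
        moreover obtain psi2 where "(psi1 has_real_derivative psi2) (at x)" "- 2 * k * q * d powr (- 2 * q / real n) * psi2 - 2 * eta\<^sup>2 * d powr (- 2 * q) * psi x powr (- q - 1) - k * (mu * d powr (- q) + gam + circ_lambda x)\<^sup>2 * psi x powr (- q - 1) + k * (t + circ_lambda x)\<^sup>2 * psi x powr (q - 1) = 0" using H by blast
        ultimately show "\<exists>D>0. (psi1 has_real_derivative D) (at x)" using pw[of x psi2] H by blast
      qed
    qed
    from no_local_max[OF der lipabs del(1) aeD] obtain y where "psi x0 < psi y" by blast
    then show False using gmax[of y] by simp
  qed
  have minpart: "min (M 1) (M (-1)) \<le> psi x" for x
  proof (rule ccontr)
    let ?Mx = "min (M 1) (M (-1))"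
    assume "\<not> ?Mx \<le> psi x"
    then have x1: "psi x < ?Mx" by (simp only: not_le)
    obtain x0 where x0: "x0 \<in> {-pi..pi}" "\<forall>y\<in>{-pi..pi}. psi x0 \<le> psi y"
      using continuous_attains_inf[of "{-pi..pi}" psi] continuous_on_subset[OF contpsi] by auto
    have gmin: "psi x0 \<le> psi y" for y using per_red[OF per, of y] x0 by auto
    have "psi x0 < ?Mx" using gmin[of x] x1 by simp
    moreover have "open {y. psi y < ?Mx}"
      by (rule open_Collect_less) (auto intro: contpsi)
    ultimately obtain del where del: "del > 0" "\<And>y. \<bar>y - x0\<bar> < del \<Longrightarrow> psi y < ?Mx"
      unfolding open_real by force
    have aeD: "AE x in lborel. x0 - del < x \<and> x < x0 + del \<longrightarrow> (\<exists>D>0. ((\<lambda>x. - psi1 x) has_real_derivative D) (at x))"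
      using key
    proof (rule eventually_mono)
      fix x assume H: "sin x \<noteq> 0 \<and> (\<exists>psi2. (psi1 has_real_derivative psi2) (at x) \<and> - 2 * k * q * d powr (- 2 * q / real n) * psi2 - 2 * eta\<^sup>2 * d powr (- 2 * q) * psi x powr (- q - 1) - k * (mu * d powr (- q) + gam + circ_lambda x)\<^sup>2 * psi x powr (- q - 1) + k * (t + circ_lambda x)\<^sup>2 * psi x powr (q - 1) = 0)"
      show "x0 - del < x \<and> x < x0 + del \<longrightarrow> (\<exists>D>0. ((\<lambda>x. - psi1 x) has_real_derivative D) (at x))"
      proof
        assume "x0 - del < x \<and> x < x0 + del"
        then have "psi x < ?Mx" using del(2)[of x] by (simp add: abs_less_iff)
        moreover obtain psi2 where d2: "(psi1 has_real_derivative psi2) (at x)" "- 2 * k * q * d powr (- 2 * q / real n) * psi2 - 2 * eta\<^sup>2 * d powr (- 2 * q) * psi x powr (- q - 1) - k * (mu * d powr (- q) + gam + circ_lambda x)\<^sup>2 * psi x powr (- q - 1) + k * (t + circ_lambda x)\<^sup>2 * psi x powr (q - 1) = 0" using H by blast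
        ultimately have "psi2 < 0" using pw[of x psi2] H by blast
        moreover have "((\<lambda>x. - psi1 x) has_real_derivative - psi2) (at x)" using d2(1) by (rule DERIV_minus)
        ultimately show "\<exists>D>0. ((\<lambda>x. - psi1 x) has_real_derivative D) (at x)" by (intro exI[of _ "- psi2"]) simp
      qed
    qed
    have der': "((\<lambda>x. - psi x) has_real_derivative - psi1 x) (at x)" for x using der[of x] by (rule DERIV_minus)
    have lip': "\<bar>- psi1 x - - psi1 y\<bar> \<le> C * \<bar>x - y\<bar>" for x y
      using lipabs[of x y] by (simp add: abs_minus_commute)
    from no_local_max[of "\<lambda>x. - psi x" "\<lambda>x. - psi1 x", OF der' lip' del(1) aeD] obtain y where "- psi x0 < - psi y" by blast
    then show False using gmin[of y] by simp
  qed
  show ?thesis using maxpart minpart unfolding Meq[unfolded gam_def] by blast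
qed

end
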